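(* Let $q\in(0,\infty]$ and $\delta>0$. Let $(g_j)_{j\in\mathbb Z}$ be measurable functions $g_j:N\to[0,\infty)$ and define $h_\ell=\sum_{j\in\mathbb Z}2^{-|j-\ell|\delta}g_j$ for $\ell\in\mathbb Z$. Suppose there is $C_1>0$ such that for all $j\in\mathbb Z$ and all $B\in\mathcal B_{-j}$, $\operatorname{ess\,sup}_{x\in B}|g_j(x)|\le C_1\operatorname{ess\,inf}_{x\in B}|g_j(x)|$. Then there is $C_2=C_2(\delta,q,C_1)>0$ with $\|(h_\ell)_{\ell\in\mathbb Z}\|_{\mathcal C_q}\le C_2\|(g_j)_{j\in\mathbb Z}\|_{\mathcal C_q}$.
   Context: Let $N$ be a homogeneous group: a connected, simply connected nilpotent Lie group whose Lie algebra carries a family of dilations $D_t=\exp(A\ln t)$, $t>0$ (Lie algebra automorphisms, $A$ diagonalizable with positive eigenvalues $1\le v_1\le\dots\le v_d$); the group dilations are $\delta_t=\exp_N\circ D_t\circ\exp_N^{-1}$, and $Q=v_1+\dots+v_d$ is the homogeneous dimension. $\mu_N$ is a Haar measure on $N$. Fix a homogeneous quasi-norm $|\cdot|$ on $N$ (continuous, $|x^{-1}|=|x|$, $|\delta_tx|=t|x|$, $|x|=0$ iff $x$ is the identity) and a constant $\gamma\ge1$ with $|xy|\le\gamma(|x|+|y|)$ for all $x,y$; $B_r(x)=\{y\in N:|y^{-1}x|<r\}$. Dyadic balls: fix a maximal family $\{B_{(2\gamma)^{-1}}(x_l)\}_{l\in\mathbb N}$ of pairwise disjoint balls and set $B^k_l=B_{2^k}(\delta_{2^k}(x_l))$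 for $k\in\mathbb Z$, $l\in\mathbb N$; $\mathcal B_k=\{B^k_l:l\in\mathbb N\}$. For a sequence $(g_j)_{j\in\mathbb Z}$ of measurable functions, $\|(g_j)_j\|_{\mathcal C_q}=\sup_{k\in\mathbb Z,l\in\mathbb N}\big(\frac{1}{\mu_N(B^k_l)}\int_{B^k_l}\sum_{j\ge-k}|g_j|^q\,d\mu_N\big)^{1/q}$ if $q<\infty$, and $\|(g_j)_j\|_{\mathcal C_\infty}=\sup_{k,l}\sup_{j\ge-k}\frac{1}{\mu_N(B^k_l)}\int_{B^k_l}|g_j|\,d\mu_N$. *)

theory Defs
  imports "HOL-Analysis.Analysis" "HOL-Probability.Probability"
begin

definition pderiv_dir :: "'a::euclidean_space \<Rightarrow> ('a \<Rightarrow> real) \<Rightarrow> 'a \<Rightarrow> real" where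
  "pderiv_dir b f x = (THE l. ((\<lambda>t. f (x + t *\<^sub>R b)) has_real_derivative l) (at 0))"

fun iter_pderiv :: "'a::euclidean_space list \<Rightarrow> ('a \<Rightarrow> real) \<Rightarrow> 'a \<Rightarrow> real" where
  "iter_pderiv [] f = f"
| "iter_pderiv (b # ds) f = pderiv_dir b (iter_pderiv ds f)"

definition smooth_fun :: "('a::euclidean_space \<Rightarrow> real) \<Rightarrow> bool" where
  "smooth_fun f \<longleftrightarrow> (\<forall>ds. set ds \<subseteq> Basis \<longrightarrow>
      continuous_on UNIV (iter_pderiv ds f) \<and>
      (\<forall>b\<in>Basis. \<forall>x. (\<lambda>t. iter_pderiv ds f (x + t *\<^sub>R b)) differentiable (at 0)))"

text \<open>The group N is modelled in exponential coordinates: N = Lie algebra = 'a (a Euclidean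
  space), exp is the identity map.  The coordinates are chosen along an eigenbasis of A,
  so A is diagonal w.r.t. Basis with eigenvalues v b; hence D_t = delta_t is given below.\<close>

definition dil :: "('a::euclidean_space \<Rightarrow> real) \<Rightarrow> real \<Rightarrow> 'a \<Rightarrow> 'a" where
  "dil v t x = (\<Sum>b\<in>Basis. (t powr v b * (x \<bullet> b)) *\<^sub>R b)"

definition homogeneous_group :: "('a::euclidean_space \<Rightarrow> 'a \<Rightarrow> 'a) \<Rightarrow> ('a \<Rightarrow> real) \<Rightarrow> bool" where
  "homogeneous_group gm v \<longleftrightarrow>
     (\<forall>x y z. gm (gm x y) z = gm x (gm y z)) \<and>
     (\<forall>x. gm 0 x = x \<and> gm x 0 = x) \<and>
     \<comment> \<open>exponential coordinates: lines through 0 are the one-parameter subgroups\<close>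
     (\<forall>x s t. gm (s *\<^sub>R x) (t *\<^sub>R x) = (s + t) *\<^sub>R x) \<and>
     \<comment> \<open>smooth (Lie) group law\<close>
     (\<forall>c\<in>Basis. smooth_fun (\<lambda>p::'a \<times> 'a. gm (fst p) (snd p) \<bullet> c)) \<and>
     \<comment> \<open>eigenvalues of A: at least 1\<close>
     (\<forall>b\<in>Basis. 1 \<le> v b) \<and>
     \<comment> \<open>dilations are automorphisms\<close>
     (\<forall>t>0. \<forall>x y. dil v t (gm x y) = gm (dil v t x) (dil v t y))"

definition haar_measure :: "('a::euclidean_space \<Rightarrow> 'a \<Rightarrow> 'a) \<Rightarrow> 'a measure \<Rightarrow> bool" where
  "haar_measure gm \<mu> \<longleftrightarrow>
     sets \<mu> = sets borel \<and>
     (\<forall>x. \<forall>E\<in>sets borel. emeasure \<mu> (gm x ` E) = emeasure \<mu> E) \<and>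
     (\<forall>K. compact K \<longrightarrow> emeasure \<mu> K < \<infinity>) \<and>
     emeasure \<mu> UNIV \<noteq> 0"

definition hom_quasi_norm ::
  "('a::euclidean_space \<Rightarrow> 'a \<Rightarrow> 'a) \<Rightarrow> ('a \<Rightarrow> real) \<Rightarrow> ('a \<Rightarrow> real) \<Rightarrow> real \<Rightarrow> bool" where
  "hom_quasi_norm gm v nrm \<gamma> \<longleftrightarrow>
     continuous_on UNIV nrm \<and>
     (\<forall>x. 0 \<le> nrm x) \<and>
     (\<forall>x. nrm (- x) = nrm x) \<and>
     (\<forall>t>0. \<forall>x. nrm (dil v t x) = t * nrm x) \<and>
     (\<forall>x. nrm x = 0 \<longleftrightarrow> x = 0) \<and>
     1 \<le> \<gamma> \<and> (\<forall>x y. nrm (gm x y) \<le> \<gamma> * (nrm x + nrm y))"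

text \<open>Quasi-balls B_r(x) = {y. |y^{-1} x| < r}; the group inverse of y is - y.\<close>
definition qball :: "('a::euclidean_space \<Rightarrow> 'a \<Rightarrow> 'a) \<Rightarrow> ('a \<Rightarrow> real) \<Rightarrow> real \<Rightarrow> 'a \<Rightarrow> 'a set" where
  "qball gm nrm r x = {y. nrm (gm (- y) x) < r}"

definition maximal_disjoint_centres ::
  "('a::euclidean_space \<Rightarrow> 'a \<Rightarrow> 'a) \<Rightarrow> ('a \<Rightarrow> real) \<Rightarrow> real \<Rightarrow> (nat \<Rightarrow> 'a) \<Rightarrow> bool" where
  "maximal_disjoint_centres gm nrm \<gamma> xs \<longleftrightarrow>
     (\<forall>l m. l \<noteq> m \<longrightarrow> qball gm nrm (1 / (2 * \<gamma>)) (xs l) \<inter> qball gm nrm (1 / (2 * \<gamma>)) (xs m) = {}) \<and>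
     (\<forall>y. \<exists>l. qball gm nrm (1 / (2 * \<gamma>)) y \<inter> qball gm nrm (1 / (2 * \<gamma>)) (xs l) \<noteq> {})"

definition dyball ::
  "('a::euclidean_space \<Rightarrow> 'a \<Rightarrow> 'a) \<Rightarrow> ('a \<Rightarrow> real) \<Rightarrow> ('a \<Rightarrow> real) \<Rightarrow> (nat \<Rightarrow> 'a) \<Rightarrow> int \<Rightarrow> nat \<Rightarrow> 'a set" where
  "dyball gm v nrm xs k l = qball gm nrm (2 powr k) (dil v (2 powr k) (xs l))"

definition esssup_on :: "'a measure \<Rightarrow> 'a set \<Rightarrow> ('a \<Rightarrow> real) \<Rightarrow> ereal" where
  "esssup_on \<mu> B f = esssup (restrict_space \<mu> B) (\<lambda>x. ereal \<bar>f x\<bar>)"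

definition essinf_on :: "'a measure \<Rightarrow> 'a set \<Rightarrow> ('a \<Rightarrow> real) \<Rightarrow> ereal" where
  "essinf_on \<mu> B f = - esssup (restrict_space \<mu> B) (\<lambda>x. - ereal \<bar>f x\<bar>)"

definition enn_powr :: "ennreal \<Rightarrow> real \<Rightarrow> ennreal" where
  "enn_powr x p = (if x = \<infinity> then \<infinity> else ennreal (enn2real x powr p))"

definition carleson_norm ::
  "('a::euclidean_space \<Rightarrow> 'a \<Rightarrow> 'a) \<Rightarrow> ('a \<Rightarrow> real) \<Rightarrow> ('a \<Rightarrow> real) \<Rightarrow> (nat \<Rightarrow> 'a) \<Rightarrow> 'a measure
    \<Rightarrow> ennreal \<Rightarrow> (int \<Rightarrow> 'a \<Rightarrow> ennreal) \<Rightarrow> ennreal" where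
  "carleson_norm gm v nrm xs \<mu> q g =
    (if q = \<infinity> then
       (SUP kl\<in>(UNIV :: (int \<times> nat) set). SUP j\<in>{- fst kl..}.
          (\<integral>\<^sup>+ x\<in>dyball gm v nrm xs (fst kl) (snd kl). g j x \<partial>\<mu>)
            / emeasure \<mu> (dyball gm v nrm xs (fst kl) (snd kl)))
     else
       (SUP kl\<in>(UNIV :: (int \<times> nat) set).
          enn_powr ((\<integral>\<^sup>+ x\<in>dyball gm v nrm xs (fst kl) (snd kl).
                       (\<integral>\<^sup>+ j. enn_powr (g j x) (enn2real q) \<partial>count_space {- fst kl..}) \<partial>\<mu>)
                     / emeasure \<mu> (dyball gm v nrm xs (fst kl) (snd kl)))
                   (1 / enn2real q)))"

end

theory Submission
  imports Defs
begin

lemma hg_assoc: "homogeneous_group gm v \<Longrightarrow> gm (gm x y) z = gm x (gm y z)"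
  unfolding homogeneous_group_def by blast
lemma hg_0: "homogeneous_group gm v \<Longrightarrow> gm 0 x = x" "homogeneous_group gm v \<Longrightarrow> gm x 0 = x"
  unfolding homogeneous_group_def by blast+
lemma hg_inv: assumes "homogeneous_group gm v" shows "gm x (-x) = 0" "gm (-x) x = 0"
proof -
  have h: "\<And>x s t. gm (s *\<^sub>R x) (t *\<^sub>R x) = (s + t) *\<^sub>R x" using assms unfolding homogeneous_group_def by blast
  show "gm x (-x) = 0" using h[of 1 x "-1"] by simp
  show "gm (-x) x = 0" using h[of "-1" x 1] by simp
qed
lemma hg_inv_unique: assumes hg: "homogeneous_group gm v" and "gm u z = 0" shows "z = -u"
proof -
  have "z = gm (gm (-u) u) z" using hg_0[OF hg] hg_inv[OF hg] by simp
  also have "\<dots> = gm (-u) (gm u z)" using hg_assoc[OF hg] by blast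
  also have "\<dots> = -u" using assms hg_0[OF hg] by simp
  finally show ?thesis .
qed
lemma hg_cancel: assumes hg: "homogeneous_group gm v"
  shows "gm b (gm (-b) x) = x" "gm (-b) (gm b x) = x"
proof -
  show "gm b (gm (-b) x) = x" using hg_assoc[OF hg, of b "-b" x, symmetric] by (simp add: hg_inv[OF hg] hg_0[OF hg])
  show "gm (-b) (gm b x) = x" using hg_assoc[OF hg, of "-b" b x, symmetric] by (simp add: hg_inv[OF hg] hg_0[OF hg])
qed
lemma hg_neg_gm: assumes hg: "homogeneous_group gm v" shows "- gm a b = gm (-b) (-a)"
proof -
  have "gm (gm a b) (gm (-b) (-a)) = 0"
    by (simp add: hg_assoc[OF hg] hg_cancel[OF hg] hg_inv[OF hg])
  from hg_inv_unique[OF hg this] show ?thesis by simp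
qed
lemma hg_gm_cont: assumes hg: "homogeneous_group gm v"
  shows "continuous_on UNIV (\<lambda>p. gm (fst p) (snd p))"
proof -
  have c: "continuous_on UNIV (\<lambda>p. gm (fst p) (snd p) \<bullet> c)" if "c \<in> Basis" for c
  proof -
    have "smooth_fun (\<lambda>p::'a \<times> 'a. gm (fst p) (snd p) \<bullet> c)" using hg that unfolding homogeneous_group_def by blast
    then have "continuous_on UNIV (iter_pderiv [] (\<lambda>p::'a \<times> 'a. gm (fst p) (snd p) \<bullet> c))"
      unfolding smooth_fun_def by (drule_tac x="[]" in spec) simp
    then show ?thesis by simp
  qed
  have eq: "(\<lambda>p. gm (fst p) (snd p)) = (\<lambda>p. \<Sum>c\<in>Basis. (gm (fst p) (snd p) \<bullet> c) *\<^sub>R c)"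
    by (simp add: euclidean_representation)
  show ?thesis
    apply (subst eq)
    by (rule continuous_on_sum, rule continuous_on_scaleR, erule c, rule continuous_on_const)
qed

lemma dil_inner: "b \<in> Basis \<Longrightarrow> dil v t x \<bullet> b = t powr v b * (x \<bullet> b)"
  unfolding dil_def by (simp add: inner_sum_left_Basis)
lemma dil_eqI: "(\<And>b. b \<in> Basis \<Longrightarrow> x \<bullet> b = y \<bullet> b) \<Longrightarrow> x = y"
  by (rule euclidean_eqI)
lemma dil_neg: "dil v t (-x) = - dil v t x"
  by (rule dil_eqI) (simp add: dil_inner)
lemma dil_comp: "s > 0 \<Longrightarrow> t > 0 \<Longrightarrow> dil v s (dil v t x) = dil v (s*t) x"
  by (rule dil_eqI) (simp add: dil_inner powr_mult)
lemma dil_1: "dil v 1 x = x"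
  by (rule dil_eqI) (simp add: dil_inner)
lemma dil_cont: "continuous_on UNIV (dil v t)"
  unfolding dil_def by (intro continuous_intros)
lemma dil_cont_t: assumes "\<forall>b\<in>Basis. 1 \<le> v b"
  shows "continuous_on {0..1} (\<lambda>t. norm (dil v t x))"
proof -
  have p: "continuous_on {0..1} (\<lambda>t::real. t powr v b)" if "b \<in> Basis" for b
    by (rule continuous_on_powr'[OF continuous_on_id continuous_on_const]) (use assms that in force)
  show ?thesis unfolding dil_def
    apply (rule continuous_on_norm, rule continuous_on_sum, rule continuous_on_scaleR)
     apply (rule continuous_on_mult[OF p continuous_on_const], assumption)
    by (rule continuous_on_const)
qed

lemma hq_props: assumes "hom_quasi_norm gm v nrm \<gamma>"
  shows "continuous_on UNIV nrm" "\<And>x. 0 \<le> nrm x" "\<And>x. nrm (-x) = nrm x"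
    "\<And>t x. t > 0 \<Longrightarrow> nrm (dil v t x) = t * nrm x" "\<And>x. nrm x = 0 \<longleftrightarrow> x = 0"
    "1 \<le> \<gamma>" "\<And>x y. nrm (gm x y) \<le> \<gamma> * (nrm x + nrm y)"
  using assms unfolding hom_quasi_norm_def by auto

lemma dil_0: "dil v 0 x = 0"
proof -
  have "(0::real) powr a = 0" for a by simp
  then show ?thesis unfolding dil_def by simp
qed

lemma small_ball:
  assumes hg: "homogeneous_group gm v" and hq: "hom_quasi_norm gm v nrm \<gamma>"
  shows "\<exists>m0>0. \<forall>x::'a::euclidean_space. nrm x < m0 \<longrightarrow> norm x < 1"
proof -
  note P = hq_props[OF hq]
  have vb: "\<forall>b\<in>Basis. 1 \<le> v b" using hg unfolding homogeneous_group_def by blast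
  obtain b0 :: 'a where "b0 \<in> Basis" using nonempty_Basis by blast
  then have "b0 \<in> sphere (0::'a) 1" by simp
  then have ne: "sphere (0::'a) 1 \<noteq> {}" by blast
  obtain x0 where x0: "x0 \<in> sphere (0::'a) 1" and mn: "\<forall>y\<in>sphere 0 1. nrm x0 \<le> nrm y"
    using continuous_attains_inf[OF compact_sphere ne continuous_on_subset[OF P(1)]] by blast
  have "x0 \<noteq> 0" using x0 by auto
  then have m0pos: "nrm x0 > 0" using P(2)[of x0] P(5)[of x0] by linarith
  show ?thesis
  proof (intro exI[of _ "nrm x0"] conjI allI impI m0pos)
    fix x :: 'a assume nx: "nrm x < nrm x0"
    show "norm x < 1"
    proof (rule ccontr)
      assume "\<not> norm x < 1"
      then have "1 \<le> norm (dil v 1 x)" by (simp add: dil_1)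
      moreover have "norm (dil v 0 x) \<le> 1" by (simp add: dil_0)
      ultimately obtain t where t: "0 \<le> t" "t \<le> 1" "norm (dil v t x) = 1"
        using IVT'[of "\<lambda>t. norm (dil v t x)" 0 1 1] dil_cont_t[OF vb] by auto
      have "t \<noteq> 0" using t dil_0 by (metis norm_zero zero_neq_one)
      then have tp: "t > 0" using t by simp
      have "nrm x0 \<le> nrm (dil v t x)" using mn t by simp
      also have "\<dots> = t * nrm x" using P(4)[OF tp] by simp
      also have "\<dots> \<le> nrm x" using t P(2)[of x] by (simp add: mult_left_le_one_le)
      finally show False using nx by simp
    qed
  qed
qed

lemma nrm_ball_compact:
  assumes hg: "homogeneous_group gm v" and hq: "hom_quasi_norm gm v nrm \<gamma>" and r: "r > 0"
  shows "\<exists>K. compact K \<and> {x::'a::euclidean_space. nrm x < r} \<subseteq> K"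
proof -
  note P = hq_props[OF hq]
  obtain m0 where m0: "m0 > 0" "\<forall>x::'a. nrm x < m0 \<longrightarrow> norm x < 1" using small_ball[OF hg hq] by blast
  have "{x::'a. nrm x < r} \<subseteq> dil v (r/m0) ` cball 0 1"
  proof
    fix x :: 'a assume "x \<in> {x. nrm x < r}"
    then have "nrm x < r" by simp
    have "nrm (dil v (m0/r) x) = (m0/r) * nrm x" using P(4) m0 r by simp
    also have "\<dots> < (m0/r) * r" by (rule mult_strict_left_mono) (use \<open>nrm x < r\<close> m0 r in auto)
    also have "\<dots> = m0" using r by simp
    finally have "norm (dil v (m0/r) x) < 1" using m0 by blast
    moreover have "dil v (r/m0) (dil v (m0/r) x) = x" using m0 r by (simp add: dil_comp dil_1)
    ultimately show "x \<in> dil v (r/m0) ` cball 0 1" by (metis image_eqI mem_cball_0 less_imp_le)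
  qed
  moreover have "compact (dil v (r/m0) ` cball 0 1)"
    by (rule compact_continuous_image[OF continuous_on_subset[OF dil_cont] compact_cball]) simp
  ultimately show ?thesis by blast
qed

lemma gm_cont1: assumes hg: "homogeneous_group gm v"
  shows "continuous_on UNIV (\<lambda>w. gm c (-w))" "continuous_on UNIV (\<lambda>y. gm (-y) c)"
proof -
  have "continuous_on UNIV ((\<lambda>p. gm (fst p) (snd p)) \<circ> (\<lambda>w. (c, -w)))"
    by (rule continuous_on_compose[OF _ continuous_on_subset[OF hg_gm_cont[OF hg]]]) (auto intro!: continuous_intros)
  then show "continuous_on UNIV (\<lambda>w. gm c (-w))" by (simp add: o_def)
  have "continuous_on UNIV ((\<lambda>p. gm (fst p) (snd p)) \<circ> (\<lambda>w. (-w, c)))"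
    by (rule continuous_on_compose[OF _ continuous_on_subset[OF hg_gm_cont[OF hg]]]) (auto intro!: continuous_intros)
  then show "continuous_on UNIV (\<lambda>y. gm (-y) c)" by (simp add: o_def)
qed

lemma qball_compact:
  assumes hg: "homogeneous_group gm v" and hq: "hom_quasi_norm gm v nrm \<gamma>"
  shows "\<exists>K. compact K \<and> qball gm nrm r (c::'a::euclidean_space) \<subseteq> K"
proof (cases "r > 0")
  case False
  then have "qball gm nrm r c = {}" using hq_props(2)[OF hq] unfolding qball_def
    by (auto simp: not_less intro: order.trans)
  then show ?thesis by (intro exI[of _ "{}"]) auto
next
  case True
  obtain K where K: "compact K" "{x::'a. nrm x < r} \<subseteq> K" using nrm_ball_compact[OF hg hq True] by blast
  have "qball gm nrm r c \<subseteq> (\<lambda>w. gm c (-w)) ` K"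
  proof
    fix y assume "y \<in> qball gm nrm r c"
    then have "gm (-y) c \<in> K" using K(2) unfolding qball_def by auto
    moreover have "gm c (- gm (-y) c) = y"
      using hg_neg_gm[OF hg, of "-y" c] hg_assoc[OF hg] hg_inv[OF hg] hg_0[OF hg] by (metis minus_minus)
    ultimately show "y \<in> (\<lambda>w. gm c (-w)) ` K" by (metis image_eqI)
  qed
  moreover have "compact ((\<lambda>w. gm c (-w)) ` K)"
    by (rule compact_continuous_image[OF continuous_on_subset[OF gm_cont1(1)[OF hg]] K(1)]) simp
  ultimately show ?thesis by blast
qed

lemma qball_open:
  assumes hg: "homogeneous_group gm v" and hq: "hom_quasi_norm gm v nrm \<gamma>"
  shows "open (qball gm nrm r (c::'a::euclidean_space))"
proof -
  have "continuous_on UNIV (\<lambda>y. nrm (gm (-y) c))"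
    by (rule continuous_on_compose2[OF hq_props(1)[OF hq] gm_cont1(2)[OF hg]]) auto
  then show ?thesis unfolding qball_def
    by (intro open_Collect_less) (auto intro: continuous_intros)
qed

lemma dyball_cover:
  assumes hg: "homogeneous_group gm v" and hq: "hom_quasi_norm gm v nrm \<gamma>"
    and md: "maximal_disjoint_centres gm nrm \<gamma> xs"
  shows "\<exists>l. (y::'a::euclidean_space) \<in> dyball gm v nrm xs k l"
proof -
  note P = hq_props[OF hq]
  define s where "s = (2::real) powr k"
  have sp: "s > 0" unfolding s_def by simp
  define y' where "y' = dil v (1/s) y"
  have yy: "dil v s y' = y" unfolding y'_def using sp by (simp add: dil_comp dil_1)
  define r0 where "r0 = 1 / (2 * \<gamma>)"
  obtain l z where z: "z \<in> qball gm nrm r0 y'" "z \<in> qball gm nrm r0 (xs l)"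
    using md unfolding maximal_disjoint_centres_def r0_def by blast
  have a: "nrm (gm (-z) y') < r0" "nrm (gm (-z) (xs l)) < r0" using z unfolding qball_def by auto
  have "gm (gm (-y') z) (gm (-z) (xs l)) = gm (-y') (gm (gm z (-z)) (xs l))"
    by (simp add: hg_assoc[OF hg])
  then have e: "gm (-y') (xs l) = gm (gm (-y') z) (gm (-z) (xs l))"
    by (simp add: hg_inv[OF hg] hg_0[OF hg])
  have "- gm (-z) y' = gm (-y') z" using hg_neg_gm[OF hg, of "-z" y'] by simp
  then have "nrm (gm (-y') z) = nrm (gm (-z) y')"
    using P(3)[of "gm (-z) y'"] by simp
  then have "nrm (gm (-y') (xs l)) \<le> \<gamma> * (nrm (gm (-z) y') + nrm (gm (-z) (xs l)))"
    using e P(7)[of "gm (-y') z" "gm (-z) (xs l)"] by simp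
  also have "\<dots> < \<gamma> * (r0 + r0)" using a P(6) by (intro mult_strict_left_mono) auto
  also have "\<dots> = 1" unfolding r0_def using P(6) by (simp add: field_simps)
  finally have lt: "nrm (gm (-y') (xs l)) < 1" .
  have hd: "dil v s (gm x w) = gm (dil v s x) (dil v s w)" for x w
    using hg sp unfolding homogeneous_group_def by blast
  have "gm (-y) (dil v s (xs l)) = gm (dil v s (-y')) (dil v s (xs l))"
    using yy by (simp add: dil_neg)
  also have "\<dots> = dil v s (gm (-y') (xs l))" using hd by simp
  finally have "gm (-y) (dil v s (xs l)) = dil v s (gm (-y') (xs l))" .
  then have "nrm (gm (-y) (dil v s (xs l))) = s * nrm (gm (-y') (xs l))"
    using P(4)[OF sp] by simp
  also have "\<dots> < s" using lt sp by simp
  finally show ?thesis unfolding dyball_def qball_def s_def by blast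
qed

lemma haar_sets: "haar_measure gm \<mu> \<Longrightarrow> sets \<mu> = sets borel"
  unfolding haar_measure_def by blast
lemma haar_space: "haar_measure gm \<mu> \<Longrightarrow> space \<mu> = UNIV"
proof -
  assume "haar_measure gm \<mu>"
  from sets_eq_imp_space_eq[OF haar_sets[OF this]] show ?thesis by simp
qed

lemma dyball_sets:
  assumes hg: "homogeneous_group gm v" and hq: "hom_quasi_norm gm v nrm \<gamma>" and hm: "haar_measure gm \<mu>"
  shows "dyball gm v nrm xs k l \<in> sets \<mu>"
proof -
  have "dyball gm v nrm xs k l \<in> sets borel" unfolding dyball_def by (rule borel_open, rule qball_open[OF hg hq])
  then show ?thesis by (simp add: haar_sets[OF hm])
qed

lemma dyball_fin:
  assumes hg: "homogeneous_group gm v" and hq: "hom_quasi_norm gm v nrm \<gamma>" and hm: "haar_measure gm \<mu>"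
  shows "emeasure \<mu> (dyball gm v nrm xs k l) < \<infinity>"
proof -
  obtain K where K: "compact K" "dyball gm v nrm xs k l \<subseteq> K"
    using qball_compact[OF hg hq] unfolding dyball_def by blast
  have "K \<in> sets borel" by (rule borel_closed, rule compact_imp_closed[OF K(1)])
  then have "K \<in> sets \<mu>" by (simp add: haar_sets[OF hm])
  then have "emeasure \<mu> (dyball gm v nrm xs k l) \<le> emeasure \<mu> K"
    using emeasure_mono[OF K(2)] by blast
  also have "\<dots> < \<infinity>" using hm K(1) unfolding haar_measure_def by blast
  finally show ?thesis .
qed

lemma enn_powr_ennreal: "0 \<le> y \<Longrightarrow> enn_powr (ennreal y) p = ennreal (y powr p)"
  unfolding enn_powr_def by simp

lemma enn_powr_mono: assumes "x \<le> y" "p > 0" shows "enn_powr x p \<le> enn_powr y p"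
proof (cases "y = \<infinity>")
  case True then show ?thesis unfolding enn_powr_def by simp
next
  case False
  then have "x \<noteq> \<infinity>" using assms(1) top.extremum_unique by fastforce
  moreover have "enn2real x \<le> enn2real y" using assms(1) False by (simp add: enn2real_mono top.not_eq_extremum)
  ultimately show ?thesis using False assms unfolding enn_powr_def
    by (simp add: powr_mono2 ennreal_leI)
qed

lemma enn_powr_mult: assumes "p > 0" shows "enn_powr (x * y) p = enn_powr x p * enn_powr y p"
proof (cases "x = \<infinity> \<or> y = \<infinity>")
  case True
  have pos: "ennreal (enn2real z powr p) \<noteq> 0" if "z \<noteq> 0" "z \<noteq> \<top>" for z
  proof -
    have "0 < enn2real z" using that by (simp add: enn2real_positive_iff top.not_eq_extremum zero_less_iff_neq_zero)
    then show ?thesis by simp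
  qed
  show ?thesis using True unfolding enn_powr_def
    by (cases "x = 0"; cases "y = 0") (auto simp: ennreal_mult_eq_top_iff ennreal_top_mult ennreal_mult_top pos enn2real_eq_0_iff)
next
  case False
  then have "x * y \<noteq> \<infinity>" by (simp add: ennreal_mult_eq_top_iff)
  then show ?thesis using False assms unfolding enn_powr_def
    by (simp add: enn2real_mult powr_mult ennreal_mult)
qed

lemma enn_powr_inv: assumes "p > 0" shows "enn_powr (enn_powr x p) (1/p) = x"
proof (cases "x = \<infinity>")
  case True then show ?thesis unfolding enn_powr_def by simp
next
  case False
  have "(enn2real x powr p) powr (1/p) = enn2real x" using assms by (simp add: powr_powr)
  then show ?thesis using False unfolding enn_powr_def by (simp add: ennreal_enn2real_if)
qed

lemma enn_powr_le_ennreal: assumes "enn_powr A (1/p) \<le> ennreal m" "p > 0" "m \<ge> 0"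
  shows "A \<le> ennreal (m powr p)"
proof -
  have "enn_powr (enn_powr A (1/p)) (1/(1/p)) \<le> enn_powr (ennreal m) (1/(1/p))"
    using assms by (intro enn_powr_mono) auto
  then show ?thesis using assms enn_powr_inv[of "1/p" A] by (simp add: enn_powr_ennreal)
qed

definition Sg :: "real \<Rightarrow> ennreal" where
  "Sg r = (\<integral>\<^sup>+ n. ennreal (2 powr (- \<bar>real_of_int n\<bar> * r)) \<partial>count_space (UNIV::int set))"

lemma Sg_shift: "(\<integral>\<^sup>+ j. ennreal (2 powr (- \<bar>real_of_int (j - m)\<bar> * r)) \<partial>count_space UNIV) = Sg r"
proof -
  have b: "bij_betw (\<lambda>j::int. j - m) UNIV UNIV"
    by (rule bij_betwI[of _ _ _ "\<lambda>j. j + m"]) auto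
  show ?thesis unfolding Sg_def
    by (rule nn_integral_bij_count_space[OF b, of "\<lambda>n. ennreal (2 powr (- \<bar>real_of_int n\<bar> * r))"])
qed

lemma count_space_le_UNIV:
  fixes f :: "'a \<Rightarrow> ennreal"
  shows "(\<integral>\<^sup>+ x. f x \<partial>count_space A) \<le> (\<integral>\<^sup>+ x. f x \<partial>count_space UNIV)"
proof (cases "A = UNIV")
  case True then show ?thesis by simp
next
  case False
  have "(\<integral>\<^sup>+ x. f x \<partial>count_space A) = (\<integral>\<^sup>+ x. f x * indicator A x \<partial>count_space UNIV)"
    by (simp add: nn_integral_count_space_indicator)
  also have "\<dots> \<le> (\<integral>\<^sup>+ x. f x \<partial>count_space UNIV)"
    by (intro nn_integral_mono) (auto simp: indicator_def)
  finally show ?thesis .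
qed

lemma count_space_point_le:
  fixes f :: "'a \<Rightarrow> ennreal"
  assumes "j \<in> A"
  shows "f j \<le> (\<integral>\<^sup>+ x. f x \<partial>count_space A)"
proof -
  have "f j = (\<integral>\<^sup>+ x. f x * indicator {j} x \<partial>count_space A)"
    using assms by (simp add: nn_integral_indicator_singleton' )
  also have "\<dots> \<le> (\<integral>\<^sup>+ x. f x \<partial>count_space A)"
    by (intro nn_integral_mono) (auto simp: indicator_def)
  finally show ?thesis .
qed

lemma Sg_fin: assumes "r > 0" shows "Sg r < \<infinity>"
proof -
  define \<rho> where "\<rho> = (2::real) powr (- r)"
  have "(2::real) powr (- r) < 2 powr 0" using assms by (intro powr_less_mono) auto
  then have \<rho>: "0 < \<rho>" "\<rho> < 1" unfolding \<rho>_def by auto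
  define f' :: "int \<Rightarrow> ennreal" where "f' n = ennreal (\<rho> ^ nat n) * indicator {0..} n" for n
  have pt: "ennreal (2 powr (- \<bar>real_of_int n\<bar> * r)) \<le> f' n + f' (- n)" for n
  proof -
    have a: "real (nat \<bar>n\<bar>) = \<bar>real_of_int n\<bar>" by simp
    have b: "\<rho> powr (real (nat \<bar>n\<bar>)) = 2 powr (- \<bar>real_of_int n\<bar> * r)"
      unfolding \<rho>_def a powr_powr by (simp add: mult.commute)
    have c: "\<rho> ^ nat \<bar>n\<bar> = \<rho> powr real (nat \<bar>n\<bar>)" by (rule powr_realpow[symmetric, OF \<rho>(1)])
    have e: "2 powr (- \<bar>real_of_int n\<bar> * r) = \<rho> ^ nat \<bar>n\<bar>"
      unfolding c b ..
    show ?thesis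
    proof (cases "n \<ge> 0")
      case True
      then have "ennreal (2 powr (- \<bar>real_of_int n\<bar> * r)) = f' n" unfolding e f'_def by simp
      then show ?thesis by simp
    next
      case False
      then have "ennreal (2 powr (- \<bar>real_of_int n\<bar> * r)) = f' (-n)" unfolding e f'_def by simp
      then show ?thesis by simp
    qed
  qed
  have b: "bij_betw (\<lambda>n::int. - n) UNIV UNIV" by (rule bij_betwI[of _ _ _ "\<lambda>n. - n"]) auto
  have neg: "(\<integral>\<^sup>+ n. f' (- n) \<partial>count_space UNIV) = (\<integral>\<^sup>+ n. f' n \<partial>count_space UNIV)"
    using nn_integral_bij_count_space[OF b, of f'] by simp
  have bn: "bij_betw int UNIV {0::int..}"
    by (rule bij_betwI[of _ _ _ nat]) auto
  have "(\<integral>\<^sup>+ n. f' n \<partial>count_space UNIV) = (\<integral>\<^sup>+ n. ennreal (\<rho> ^ nat n) \<partial>count_space {0..})"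
    unfolding f'_def by (simp add: nn_integral_count_space_indicator)
  also have "\<dots> = (\<integral>\<^sup>+ m. ennreal (\<rho> ^ nat (int m)) \<partial>count_space UNIV)"
    using nn_integral_bij_count_space[OF bn, of "\<lambda>n. ennreal (\<rho> ^ nat n)"] by simp
  also have "\<dots> = (\<Sum>m. ennreal (\<rho> ^ m))" by (simp add: nn_integral_count_space_nat)
  also have "\<dots> = ennreal (\<Sum>m. \<rho> ^ m)"
    using \<rho> by (intro suminf_ennreal2) (auto intro: summable_geometric)
  finally have f'fin: "(\<integral>\<^sup>+ n. f' n \<partial>count_space UNIV) < \<infinity>" by simp
  have "Sg r \<le> (\<integral>\<^sup>+ n. f' n + f' (- n) \<partial>count_space UNIV)"
    unfolding Sg_def by (intro nn_integral_mono pt)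
  also have "\<dots> = (\<integral>\<^sup>+ n. f' n \<partial>count_space UNIV) + (\<integral>\<^sup>+ n. f' (-n) \<partial>count_space UNIV)"
    by (rule nn_integral_add) auto
  also have "\<dots> < \<infinity>" using f'fin neg by (simp add: ennreal_add_less_top)
  finally show ?thesis .
qed

lemma ball_bound:
  fixes F :: "'a \<Rightarrow> real"
  assumes B: "B \<in> sets \<mu>" and fin: "emeasure \<mu> B < \<infinity>" and F0: "\<And>x. 0 \<le> F x"
    and p: "p > 0" and m: "m \<ge> 0" and C1: "C1 > 0"
    and reg: "esssup_on \<mu> B F \<le> ereal C1 * essinf_on \<mu> B F"
    and avg: "(\<integral>\<^sup>+x\<in>B. ennreal (F x powr p) \<partial>\<mu>) / emeasure \<mu> B \<le> ennreal (m powr p)"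
  shows "AE x in \<mu>. x \<in> B \<longrightarrow> F x \<le> C1 * m"
proof (cases "emeasure \<mu> B = 0")
  case True
  then have "B \<in> null_sets \<mu>" using B by (simp add: null_sets_def)
  from AE_not_in[OF this] show ?thesis by (rule eventually_mono) auto
next
  case False
  have Bs: "B \<inter> space \<mu> \<in> sets \<mu>" using B by simp
  define E where "E = essinf_on \<mu> B F"
  have A1: "AE x in restrict_space \<mu> B. ereal \<bar>F x\<bar> \<le> esssup_on \<mu> B F"
    unfolding esssup_on_def by (rule esssup_AE)
  have A2: "AE x in restrict_space \<mu> B. E \<le> ereal \<bar>F x\<bar>"
  proof -
    have "AE x in restrict_space \<mu> B. - ereal \<bar>F x\<bar> \<le> esssup (restrict_space \<mu> B) (\<lambda>x. - ereal \<bar>F x\<bar>)"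
      by (rule esssup_AE)
    then show ?thesis unfolding E_def essinf_on_def
      by (rule eventually_mono) (simp add: ereal_uminus_le_reorder)
  qed
  have EM: "E \<le> ereal m"
  proof (rule ccontr)
    assume "\<not> E \<le> ereal m"
    then have "ereal m < E" by simp
    then obtain e where e: "ereal m < ereal e" "ereal e < E" using ereal_dense2 by blast
    then have me: "m < e" by simp
    have "AE x in restrict_space \<mu> B. e \<le> F x"
      using A2
    proof (rule eventually_mono)
      fix x assume "E \<le> ereal \<bar>F x\<bar>"
      then have "ereal e \<le> ereal \<bar>F x\<bar>" using e(2) by (meson less_imp_le order_trans)
      then show "e \<le> F x" using F0[of x] by simp
    qed
    then have AEe: "AE x in \<mu>. x \<in> B \<longrightarrow> e \<le> F x" using AE_restrict_space_iff[OF Bs] by simp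
    have "(\<integral>\<^sup>+x\<in>B. ennreal (e powr p) \<partial>\<mu>) \<le> (\<integral>\<^sup>+x\<in>B. ennreal (F x powr p) \<partial>\<mu>)"
    proof (rule nn_integral_mono_AE)
      show "AE x in \<mu>. ennreal (e powr p) * indicator B x \<le> ennreal (F x powr p) * indicator B x"
        using AEe
      proof (rule eventually_mono)
        fix x assume "x \<in> B \<longrightarrow> e \<le> F x"
        then show "ennreal (e powr p) * indicator B x \<le> ennreal (F x powr p) * indicator B x"
          using me m p by (cases "x \<in> B") (auto intro!: ennreal_leI powr_mono2)
      qed
    qed
    moreover have "(\<integral>\<^sup>+x\<in>B. ennreal (e powr p) \<partial>\<mu>) = ennreal (e powr p) * emeasure \<mu> B"
      using B by (simp add: nn_integral_cmult_indicator)
    ultimately have "ennreal (e powr p) * emeasure \<mu> B / emeasure \<mu> B \<le> ennreal (m powr p)"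
      using avg divide_right_mono_ennreal order_trans by metis
    then have "ennreal (e powr p) \<le> ennreal (m powr p)" using ennreal_mult_divide_eq[OF False] fin by simp
    then have "e powr p \<le> m powr p" by (simp add: ennreal_le_iff)
    moreover have "m powr p < e powr p" using me m p by (intro powr_less_mono2) auto
    ultimately show False by simp
  qed
  have CE: "ereal C1 * E \<le> ereal (C1 * m)" using ereal_mult_left_mono[OF EM, of "ereal C1"] C1 by simp
  have "AE x in restrict_space \<mu> B. F x \<le> C1 * m"
    using A1
  proof (rule eventually_mono)
    fix x assume "ereal \<bar>F x\<bar> \<le> esssup_on \<mu> B F"
    then have "ereal \<bar>F x\<bar> \<le> ereal (C1 * m)" using reg CE unfolding E_def by (meson order_trans)
    then show "F x \<le> C1 * m" using F0[of x] by simp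
  qed
  then show ?thesis using AE_restrict_space_iff[OF Bs] by simp
qed

lemma global_bound:
  fixes g :: "int \<Rightarrow> 'a::euclidean_space \<Rightarrow> real"
  assumes hg: "homogeneous_group gm v" and hm: "haar_measure gm \<mu>"
    and hq: "hom_quasi_norm gm v nrm \<gamma>" and md: "maximal_disjoint_centres gm nrm \<gamma> xs"
    and p: "p > 0" and m: "m \<ge> 0" and C1: "C1 > 0" and g0: "\<And>j x. 0 \<le> g j x"
    and reg: "\<And>j l. esssup_on \<mu> (dyball gm v nrm xs (- j) l) (g j)
                   \<le> ereal C1 * essinf_on \<mu> (dyball gm v nrm xs (- j) l) (g j)"
    and avg: "\<And>j l. (\<integral>\<^sup>+x\<in>dyball gm v nrm xs (- j) l. ennreal (g j x powr p) \<partial>\<mu>)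
                   / emeasure \<mu> (dyball gm v nrm xs (- j) l) \<le> ennreal (m powr p)"
  shows "AE x in \<mu>. \<forall>j. g j x \<le> C1 * m"
proof -
  have "AE x in \<mu>. x \<in> dyball gm v nrm xs (- j) l \<longrightarrow> g j x \<le> C1 * m" for j l
    by (rule ball_bound[OF dyball_sets[OF hg hq hm] dyball_fin[OF hg hq hm] g0 p m C1 reg avg])
  then have "AE x in \<mu>. \<forall>l. x \<in> dyball gm v nrm xs (- j) l \<longrightarrow> g j x \<le> C1 * m" for j
    by (subst AE_all_countable) blast
  then have "AE x in \<mu>. \<forall>j. \<forall>l. x \<in> dyball gm v nrm xs (- j) l \<longrightarrow> g j x \<le> C1 * m"
    by (subst AE_all_countable) blast
  then show ?thesis
  proof (rule eventually_mono)
    fix x assume a: "\<forall>j l. x \<in> dyball gm v nrm xs (- j) l \<longrightarrow> g j x \<le> C1 * m"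
    show "\<forall>j. g j x \<le> C1 * m"
    proof
      fix j
      obtain l where "x \<in> dyball gm v nrm xs (- j) l" using dyball_cover[OF hg hq md] by blast
      then show "g j x \<le> C1 * m" using a by blast
    qed
  qed
qed

lemma meas_count_sum:
  fixes f :: "'i \<Rightarrow> 'a \<Rightarrow> ennreal"
  assumes "countable I" and [measurable]: "\<And>i. i \<in> I \<Longrightarrow> f i \<in> borel_measurable M"
  shows "(\<lambda>x. \<integral>\<^sup>+i. f i x \<partial>count_space I) \<in> borel_measurable M"
proof cases
  assume "finite I" then show ?thesis
    by (simp add: nn_integral_count_space_finite)
next
  assume "infinite I"
  then have [simp]: "I \<noteq> {}" by auto
  note * = bij_betw_from_nat_into[OF \<open>countable I\<close> \<open>infinite I\<close>]
  have **: "\<And>f. (\<integral>\<^sup>+i. f i \<partial>count_space I) = (\<Sum>n. f (from_nat_into I n))"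
    by (simp add: nn_integral_bij_count_space[symmetric, OF *] nn_integral_count_space_nat)
  show ?thesis
    by (simp add: ** from_nat_into)
qed

lemma int_le_of_avg:
  fixes f :: "'a \<Rightarrow> ennreal"
  assumes B: "B \<in> sets \<mu>" and fin: "emeasure \<mu> B < \<infinity>"
    and a: "(\<integral>\<^sup>+x\<in>B. f x \<partial>\<mu>) / emeasure \<mu> B \<le> c"
  shows "(\<integral>\<^sup>+x\<in>B. f x \<partial>\<mu>) \<le> c * emeasure \<mu> B"
proof (cases "emeasure \<mu> B = 0")
  case True
  then have "B \<in> null_sets \<mu>" using B by (simp add: null_sets_def)
  then show ?thesis by (simp add: nn_integral_null_set)
next
  case False
  have "(\<integral>\<^sup>+x\<in>B. f x \<partial>\<mu>) = (\<integral>\<^sup>+x\<in>B. f x \<partial>\<mu>) / emeasure \<mu> B * emeasure \<mu> B"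
    using False fin by (simp add: ennreal_divide_times ennreal_divide_self)
  also have "\<dots> \<le> c * emeasure \<mu> B" using a by (rule mult_right_mono) simp
  finally show ?thesis .
qed

lemma div_self_le:
  fixes c b :: ennreal
  shows "(c * b) / b \<le> c"
proof (cases "b = 0 \<or> b = \<top>")
  case True then show ?thesis by (auto simp: divide_ennreal_def ennreal_mult_top)
next
  case False then show ?thesis by (simp add: ennreal_mult_divide_eq)
qed

lemma pw_fin:
  fixes G :: "int \<Rightarrow> real"
  assumes p: "p > 0" and d: "\<delta> > 0" and m: "m \<ge> 0" and C1: "C1 > 0"
    and G0: "\<And>j. 0 \<le> G j" and Gb: "\<And>j. G j \<le> C1 * m" and l: "ll \<ge> - k"
  shows "enn_powr (\<integral>\<^sup>+ j. ennreal (2 powr (- \<bar>real_of_int (j - ll)\<bar> * \<delta>) * G j) \<partial>count_space UNIV) p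
   \<le> enn_powr (Sg (\<delta>/2)) p * ((\<integral>\<^sup>+ j. ennreal (2 powr (- \<bar>real_of_int (j - ll)\<bar> * (\<delta>/2*p)) * G j powr p) \<partial>count_space {-k..})
        + ennreal ((C1*m) powr p) * ennreal (2 powr (- \<bar>real_of_int (ll - (-k))\<bar> * (\<delta>/2*p))))"
  (is "_ \<le> _ * ?R")
proof -
  define \<alpha> where "\<alpha> = \<delta>/2"
  have \<alpha>: "\<alpha> > 0" unfolding \<alpha>_def using d by simp
  define a where "a j = (2::real) powr (- \<bar>real_of_int (j - ll)\<bar> * \<alpha>)" for j
  have a0: "a j > 0" for j unfolding a_def by simp
  have pw: "(a j * G j) powr p = 2 powr (- \<bar>real_of_int (j - ll)\<bar> * (\<alpha>*p)) * G j powr p" for j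
    unfolding a_def using G0[of j] by (simp add: powr_mult powr_powr mult.assoc)
  have c1: "ennreal ((a j * G j) powr p) \<le> ?R" for j
  proof (cases "j \<ge> -k")
    case True
    have "ennreal ((a j * G j) powr p) \<le> (\<integral>\<^sup>+ j. ennreal (2 powr (- \<bar>real_of_int (j - ll)\<bar> * (\<delta>/2*p)) * G j powr p) \<partial>count_space {-k..})"
      unfolding pw \<alpha>_def by (rule count_space_point_le) (use True in simp)
    then show ?thesis by (rule order_trans) simp
  next
    case False
    have "\<bar>real_of_int (ll - (-k))\<bar> \<le> \<bar>real_of_int (j - ll)\<bar>" using False l by linarith
    then have "a j \<le> 2 powr (- \<bar>real_of_int (ll - (-k))\<bar> * \<alpha>)" unfolding a_def
      using \<alpha> by (intro powr_mono) auto
    then have "a j * G j \<le> 2 powr (- \<bar>real_of_int (ll - (-k))\<bar> * \<alpha>) * (C1 * m)"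
      using G0[of j] Gb[of j] a0[of j] by (intro mult_mono) auto
    then have "(a j * G j) powr p \<le> (2 powr (- \<bar>real_of_int (ll - (-k))\<bar> * \<alpha>) * (C1 * m)) powr p"
      using G0[of j] a0[of j] p by (intro powr_mono2) auto
    also have "\<dots> = (C1*m) powr p * 2 powr (- \<bar>real_of_int (ll - (-k))\<bar> * (\<alpha>*p))"
      using C1 m by (simp add: powr_mult powr_powr mult_ac)
    finally have "ennreal ((a j * G j) powr p) \<le> ennreal ((C1*m) powr p) * ennreal (2 powr (- \<bar>real_of_int (ll - (-k))\<bar> * (\<delta>/2*p)))"
      unfolding \<alpha>_def by (simp add: ennreal_mult[symmetric] ennreal_leI)
    then show ?thesis by (rule order_trans) simp
  qed
  have c2: "ennreal (a j * G j) \<le> enn_powr ?R (1/p)" for j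
  proof -
    have "ennreal (a j * G j) = enn_powr (ennreal ((a j * G j) powr p)) (1/p)"
      using a0[of j] G0[of j] p by (simp add: enn_powr_ennreal powr_powr)
    also have "\<dots> \<le> enn_powr ?R (1/p)" using c1 p by (intro enn_powr_mono) auto
    finally show ?thesis .
  qed
  have "(\<integral>\<^sup>+ j. ennreal (2 powr (- \<bar>real_of_int (j - ll)\<bar> * \<delta>) * G j) \<partial>count_space UNIV)
      = (\<integral>\<^sup>+ j. ennreal (a j) * ennreal (a j * G j) \<partial>count_space UNIV)"
  proof (rule nn_integral_cong)
    fix j
    have "2 powr (- \<bar>real_of_int (j - ll)\<bar> * \<delta>) = a j * a j" unfolding a_def \<alpha>_def
      by (simp add: powr_add[symmetric] mult_ac)
    then show "ennreal (2 powr (- \<bar>real_of_int (j - ll)\<bar> * \<delta>) * G j) = ennreal (a j) * ennreal (a j * G j)"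
      using a0[of j] G0[of j] by (simp add: ennreal_mult[symmetric] mult.assoc)
  qed
  also have "\<dots> \<le> (\<integral>\<^sup>+ j. ennreal (a j) * enn_powr ?R (1/p) \<partial>count_space UNIV)"
    by (intro nn_integral_mono mult_left_mono c2) auto
  also have "\<dots> = (\<integral>\<^sup>+ j. ennreal (a j) \<partial>count_space UNIV) * enn_powr ?R (1/p)"
    by (rule nn_integral_multc) simp
  also have "\<dots> = Sg (\<delta>/2) * enn_powr ?R (1/p)"
    unfolding a_def \<alpha>_def by (simp only: Sg_shift)
  finally have le: "(\<integral>\<^sup>+ j. ennreal (2 powr (- \<bar>real_of_int (j - ll)\<bar> * \<delta>) * G j) \<partial>count_space UNIV)
      \<le> Sg (\<delta>/2) * enn_powr ?R (1/p)" .
  have "enn_powr (\<integral>\<^sup>+ j. ennreal (2 powr (- \<bar>real_of_int (j - ll)\<bar> * \<delta>) * G j) \<partial>count_space UNIV) p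
      \<le> enn_powr (Sg (\<delta>/2) * enn_powr ?R (1/p)) p" using le p by (rule enn_powr_mono)
  also have "\<dots> = enn_powr (Sg (\<delta>/2)) p * enn_powr (enn_powr ?R (1/p)) p"
    using p by (rule enn_powr_mult)
  also have "enn_powr (enn_powr ?R (1/p)) p = ?R"
    using enn_powr_inv[of "1/p" ?R] p by simp
  finally show ?thesis .
qed

lemma sum_fin:
  fixes G :: "int \<Rightarrow> real"
  assumes p: "p > 0" and d: "\<delta> > 0" and G0: "\<And>j. 0 \<le> G j"
  shows "(\<integral>\<^sup>+ ll. K * ((\<integral>\<^sup>+ j. ennreal (2 powr (- \<bar>real_of_int (j - ll)\<bar> * \<beta>) * G j powr p) \<partial>count_space {-k..})
        + c * ennreal (2 powr (- \<bar>real_of_int (ll - (-k))\<bar> * \<beta>))) \<partial>count_space {-k..})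
   \<le> K * (Sg \<beta> * (\<integral>\<^sup>+ j. ennreal (G j powr p) \<partial>count_space {-k..}) + c * Sg \<beta>)"
proof -
  have A: "(\<integral>\<^sup>+ ll. (\<integral>\<^sup>+ j. ennreal (2 powr (- \<bar>real_of_int (j - ll)\<bar> * \<beta>) * G j powr p) \<partial>count_space {-k..}) \<partial>count_space {-k..})
      \<le> Sg \<beta> * (\<integral>\<^sup>+ j. ennreal (G j powr p) \<partial>count_space {-k..})"
  proof -
    have "(\<integral>\<^sup>+ ll. (\<integral>\<^sup>+ j. ennreal (2 powr (- \<bar>real_of_int (j - ll)\<bar> * \<beta>) * G j powr p) \<partial>count_space {-k..}) \<partial>count_space {-k..})
      = (\<integral>\<^sup>+ j. (\<integral>\<^sup>+ ll. ennreal (2 powr (- \<bar>real_of_int (j - ll)\<bar> * \<beta>) * G j powr p) \<partial>count_space {-k..}) \<partial>count_space {-k..})"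
      by (rule nn_integral_count_space_nn_integral) auto
    also have "\<dots> \<le> (\<integral>\<^sup>+ j. Sg \<beta> * ennreal (G j powr p) \<partial>count_space {-k..})"
    proof (rule nn_integral_mono)
      fix j
      have "(\<integral>\<^sup>+ ll. ennreal (2 powr (- \<bar>real_of_int (j - ll)\<bar> * \<beta>) * G j powr p) \<partial>count_space {-k..})
          = (\<integral>\<^sup>+ ll. ennreal (2 powr (- \<bar>real_of_int (ll - j)\<bar> * \<beta>)) * ennreal (G j powr p) \<partial>count_space {-k..})"
        by (intro nn_integral_cong) (simp add: ennreal_mult[symmetric] abs_minus_commute)
      also have "\<dots> \<le> (\<integral>\<^sup>+ ll. ennreal (2 powr (- \<bar>real_of_int (ll - j)\<bar> * \<beta>)) * ennreal (G j powr p) \<partial>count_space UNIV)"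
        by (rule count_space_le_UNIV)
      also have "\<dots> = (\<integral>\<^sup>+ ll. ennreal (2 powr (- \<bar>real_of_int (ll - j)\<bar> * \<beta>)) \<partial>count_space UNIV) * ennreal (G j powr p)"
        by (rule nn_integral_multc) simp
      also have "\<dots> = Sg \<beta> * ennreal (G j powr p)"
        by (simp only: Sg_shift)
      finally show "(\<integral>\<^sup>+ ll. ennreal (2 powr (- \<bar>real_of_int (j - ll)\<bar> * \<beta>) * G j powr p) \<partial>count_space {-k..})
          \<le> Sg \<beta> * ennreal (G j powr p)" .
    qed
    also have "\<dots> = Sg \<beta> * (\<integral>\<^sup>+ j. ennreal (G j powr p) \<partial>count_space {-k..})"
      by (rule nn_integral_cmult) auto
    finally show ?thesis .
  qed
  have B: "(\<integral>\<^sup>+ ll. c * ennreal (2 powr (- \<bar>real_of_int (ll - (-k))\<bar> * \<beta>)) \<partial>count_space {-k..}) \<le> c * Sg \<beta>"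
  proof -
    have "(\<integral>\<^sup>+ ll. c * ennreal (2 powr (- \<bar>real_of_int (ll - (-k))\<bar> * \<beta>)) \<partial>count_space {-k..})
        \<le> (\<integral>\<^sup>+ ll. c * ennreal (2 powr (- \<bar>real_of_int (ll - (-k))\<bar> * \<beta>)) \<partial>count_space UNIV)"
      by (rule count_space_le_UNIV)
    also have "\<dots> = c * (\<integral>\<^sup>+ ll. ennreal (2 powr (- \<bar>real_of_int (ll - (-k))\<bar> * \<beta>)) \<partial>count_space UNIV)"
      by (rule nn_integral_cmult) simp
    also have "\<dots> = c * Sg \<beta>" by (simp only: Sg_shift)
    finally show ?thesis .
  qed
  have "(\<integral>\<^sup>+ ll. K * ((\<integral>\<^sup>+ j. ennreal (2 powr (- \<bar>real_of_int (j - ll)\<bar> * \<beta>) * G j powr p) \<partial>count_space {-k..})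
        + c * ennreal (2 powr (- \<bar>real_of_int (ll - (-k))\<bar> * \<beta>))) \<partial>count_space {-k..})
    = K * ((\<integral>\<^sup>+ ll. (\<integral>\<^sup>+ j. ennreal (2 powr (- \<bar>real_of_int (j - ll)\<bar> * \<beta>) * G j powr p) \<partial>count_space {-k..}) \<partial>count_space {-k..})
        + (\<integral>\<^sup>+ ll. c * ennreal (2 powr (- \<bar>real_of_int (ll - (-k))\<bar> * \<beta>)) \<partial>count_space {-k..}))"
    by (simp add: nn_integral_cmult nn_integral_add)
  also have "\<dots> \<le> K * (Sg \<beta> * (\<integral>\<^sup>+ j. ennreal (G j powr p) \<partial>count_space {-k..}) + c * Sg \<beta>)"
    by (intro mult_left_mono add_mono A B) auto
  finally show ?thesis .
qed

lemma est_inf: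
  fixes g :: "int \<Rightarrow> 'a \<Rightarrow> real"
  assumes B[measurable]: "B \<in> sets \<mu>" and fin: "emeasure \<mu> B < \<infinity>"
    and gm[measurable]: "\<And>j. g j \<in> borel_measurable \<mu>" and g0: "\<And>j x. 0 \<le> g j x"
    and AEg: "AE x in \<mu>. \<forall>j. g j x \<le> C1 * m" and m: "m \<ge> 0" and C1: "C1 > 0"
    and avg: "\<And>j. j \<ge> -k \<Longrightarrow> (\<integral>\<^sup>+x\<in>B. ennreal (g j x) \<partial>\<mu>) / emeasure \<mu> B \<le> ennreal m"
  shows "(\<integral>\<^sup>+x\<in>B. (\<integral>\<^sup>+ j. ennreal (2 powr (- \<bar>real_of_int (j - ll)\<bar> * \<delta>) * g j x) \<partial>count_space UNIV) \<partial>\<mu>)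
           / emeasure \<mu> B \<le> Sg \<delta> * ennreal ((1 + C1) * m)"
proof -
  define a where "a j = (2::real) powr (- \<bar>real_of_int (j - ll)\<bar> * \<delta>)" for j
  have a0: "a j > 0" for j unfolding a_def by simp
  define F where "F j x = ennreal (a j) * (ennreal (g j x) * indicator {-k..} j + ennreal (C1*m)) * indicator B x" for j x
  have Fm[measurable]: "F j \<in> borel_measurable \<mu>" for j unfolding F_def by measurable
  have s1: "(\<integral>\<^sup>+x\<in>B. (\<integral>\<^sup>+ j. ennreal (2 powr (- \<bar>real_of_int (j - ll)\<bar> * \<delta>) * g j x) \<partial>count_space UNIV) \<partial>\<mu>)
      \<le> (\<integral>\<^sup>+x. (\<integral>\<^sup>+ j. F j x \<partial>count_space UNIV) \<partial>\<mu>)"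
  proof (rule nn_integral_mono_AE)
    show "AE x in \<mu>. (\<integral>\<^sup>+ j. ennreal (2 powr (- \<bar>real_of_int (j - ll)\<bar> * \<delta>) * g j x) \<partial>count_space UNIV) * indicator B x
        \<le> (\<integral>\<^sup>+ j. F j x \<partial>count_space UNIV)"
      using AEg
    proof (rule eventually_mono)
      fix x assume gx: "\<forall>j. g j x \<le> C1 * m"
      show "(\<integral>\<^sup>+ j. ennreal (2 powr (- \<bar>real_of_int (j - ll)\<bar> * \<delta>) * g j x) \<partial>count_space UNIV) * indicator B x
        \<le> (\<integral>\<^sup>+ j. F j x \<partial>count_space UNIV)"
      proof (cases "x \<in> B")
        case False then show ?thesis by simp
      next
        case True
        have "(\<integral>\<^sup>+ j. ennreal (2 powr (- \<bar>real_of_int (j - ll)\<bar> * \<delta>) * g j x) \<partial>count_space UNIV)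
            \<le> (\<integral>\<^sup>+ j. F j x \<partial>count_space UNIV)"
        proof (rule nn_integral_mono)
          fix j
          have "ennreal (g j x) \<le> ennreal (g j x) * indicator {-k..} j + ennreal (C1*m)"
            using gx by (cases "j \<ge> -k") (auto intro: ennreal_leI)
          then show "ennreal (2 powr (- \<bar>real_of_int (j - ll)\<bar> * \<delta>) * g j x) \<le> F j x"
            unfolding F_def a_def using True g0[of j x] by (simp add: ennreal_mult mult_left_mono)
        qed
        then show ?thesis using True by simp
      qed
    qed
  qed
  also have "\<dots> = (\<integral>\<^sup>+ j. (\<integral>\<^sup>+x. F j x \<partial>\<mu>) \<partial>count_space UNIV)"
    by (rule nn_integral_count_space_nn_integral) auto
  also have "\<dots> \<le> (\<integral>\<^sup>+ j. ennreal (a j) * ((ennreal m + ennreal (C1*m)) * emeasure \<mu> B) \<partial>count_space UNIV)"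
  proof (rule nn_integral_mono)
    fix j
    have "(\<integral>\<^sup>+x. F j x \<partial>\<mu>) = (\<integral>\<^sup>+x. (ennreal (a j) * indicator {-k..} j) * (ennreal (g j x) * indicator B x)
             + (ennreal (a j) * ennreal (C1*m)) * indicator B x \<partial>\<mu>)"
      unfolding F_def by (intro nn_integral_cong) (simp add: algebra_simps)
    also have "\<dots> = (ennreal (a j) * indicator {-k..} j) * (\<integral>\<^sup>+x\<in>B. ennreal (g j x) \<partial>\<mu>)
             + (ennreal (a j) * ennreal (C1*m)) * emeasure \<mu> B"
      by (simp add: nn_integral_add nn_integral_cmult nn_integral_cmult_indicator)
    also have "\<dots> \<le> ennreal (a j) * (ennreal m * emeasure \<mu> B) + (ennreal (a j) * ennreal (C1*m)) * emeasure \<mu> B"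
    proof (rule add_mono)
      show "(ennreal (a j) * indicator {-k..} j) * (\<integral>\<^sup>+x\<in>B. ennreal (g j x) \<partial>\<mu>) \<le> ennreal (a j) * (ennreal m * emeasure \<mu> B)"
      proof (cases "j \<ge> -k")
        case True
        then show ?thesis using int_le_of_avg[OF B fin avg[OF True]]
          by (simp add: mult_left_mono)
      qed simp
    qed simp
    also have "\<dots> = ennreal (a j) * ((ennreal m + ennreal (C1*m)) * emeasure \<mu> B)"
      by (simp add: algebra_simps)
    finally show "(\<integral>\<^sup>+x. F j x \<partial>\<mu>) \<le> ennreal (a j) * ((ennreal m + ennreal (C1*m)) * emeasure \<mu> B)" .
  qed
  also have "\<dots> = (\<integral>\<^sup>+ j. ennreal (a j) \<partial>count_space UNIV) * ((ennreal m + ennreal (C1*m)) * emeasure \<mu> B)"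
    by (rule nn_integral_multc) simp
  also have "\<dots> = Sg \<delta> * ((ennreal m + ennreal (C1*m)) * emeasure \<mu> B)"
    unfolding a_def by (simp only: Sg_shift)
  finally have le: "(\<integral>\<^sup>+x\<in>B. (\<integral>\<^sup>+ j. ennreal (2 powr (- \<bar>real_of_int (j - ll)\<bar> * \<delta>) * g j x) \<partial>count_space UNIV) \<partial>\<mu>)
      \<le> (Sg \<delta> * (ennreal m + ennreal (C1*m))) * emeasure \<mu> B" by (simp add: mult.assoc)
  have "ennreal m + ennreal (C1*m) = ennreal ((1 + C1) * m)"
    using m C1 by (simp add: ennreal_plus[symmetric] algebra_simps del: ennreal_plus)
  then show ?thesis
    using order_trans[OF divide_right_mono_ennreal[OF le] div_self_le] by simp
qed

lemma est_fin:
  fixes g :: "int \<Rightarrow> 'a \<Rightarrow> real"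
  assumes B[measurable]: "B \<in> sets \<mu>" and fin: "emeasure \<mu> B < \<infinity>"
    and gm[measurable]: "\<And>j. g j \<in> borel_measurable \<mu>" and g0: "\<And>j x. 0 \<le> g j x"
    and AEg: "AE x in \<mu>. \<forall>j. g j x \<le> C1 * m" and m: "m \<ge> 0" and C1: "C1 > 0"
    and d: "\<delta> > 0" and p: "p > 0"
    and avg: "(\<integral>\<^sup>+x\<in>B. (\<integral>\<^sup>+ j. ennreal (g j x powr p) \<partial>count_space {-k..}) \<partial>\<mu>) / emeasure \<mu> B \<le> ennreal (m powr p)"
  shows "(\<integral>\<^sup>+x\<in>B. (\<integral>\<^sup>+ ll. enn_powr (\<integral>\<^sup>+ j. ennreal (2 powr (- \<bar>real_of_int (j - ll)\<bar> * \<delta>) * g j x) \<partial>count_space UNIV) p \<partial>count_space {-k..}) \<partial>\<mu>)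
           / emeasure \<mu> B \<le> (enn_powr (Sg (\<delta>/2)) p * Sg (\<delta>/2*p) * (1 + ennreal (C1 powr p))) * ennreal (m powr p)"
proof -
  define Ka where "Ka = enn_powr (Sg (\<delta>/2)) p"
  define Sb where "Sb = Sg (\<delta>/2*p)"
  define c where "c = ennreal ((C1*m) powr p)"
  define W where "W x = (\<integral>\<^sup>+ j. ennreal (g j x powr p) \<partial>count_space {-k..})" for x
  have Wm[measurable]: "W \<in> borel_measurable \<mu>" unfolding W_def
    by (rule meas_count_sum) auto
  have pt: "(\<integral>\<^sup>+ ll. enn_powr (\<integral>\<^sup>+ j. ennreal (2 powr (- \<bar>real_of_int (j - ll)\<bar> * \<delta>) * g j x) \<partial>count_space UNIV) p \<partial>count_space {-k..})
      \<le> Ka * (Sb * W x + c * Sb)" if gx: "\<forall>j. g j x \<le> C1 * m" for x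
  proof -
    have "(\<integral>\<^sup>+ ll. enn_powr (\<integral>\<^sup>+ j. ennreal (2 powr (- \<bar>real_of_int (j - ll)\<bar> * \<delta>) * g j x) \<partial>count_space UNIV) p \<partial>count_space {-k..})
      \<le> (\<integral>\<^sup>+ ll. Ka * ((\<integral>\<^sup>+ j. ennreal (2 powr (- \<bar>real_of_int (j - ll)\<bar> * (\<delta>/2*p)) * g j x powr p) \<partial>count_space {-k..})
        + c * ennreal (2 powr (- \<bar>real_of_int (ll - (-k))\<bar> * (\<delta>/2*p)))) \<partial>count_space {-k..})"
    proof (rule nn_integral_mono)
      fix ll assume "ll \<in> space (count_space {-k..})"
      then have "ll \<ge> -k" by simp
      then show "enn_powr (\<integral>\<^sup>+ j. ennreal (2 powr (- \<bar>real_of_int (j - ll)\<bar> * \<delta>) * g j x) \<partial>count_space UNIV) p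
        \<le> Ka * ((\<integral>\<^sup>+ j. ennreal (2 powr (- \<bar>real_of_int (j - ll)\<bar> * (\<delta>/2*p)) * g j x powr p) \<partial>count_space {-k..})
        + c * ennreal (2 powr (- \<bar>real_of_int (ll - (-k))\<bar> * (\<delta>/2*p))))"
        unfolding Ka_def c_def using pw_fin[OF p d m C1, of "\<lambda>j. g j x"] g0 gx by blast
    qed
    also have "\<dots> \<le> Ka * (Sb * W x + c * Sb)"
      unfolding Sb_def W_def by (rule sum_fin[OF p d g0])
    finally show ?thesis .
  qed
  have "(\<integral>\<^sup>+x\<in>B. (\<integral>\<^sup>+ ll. enn_powr (\<integral>\<^sup>+ j. ennreal (2 powr (- \<bar>real_of_int (j - ll)\<bar> * \<delta>) * g j x) \<partial>count_space UNIV) p \<partial>count_space {-k..}) \<partial>\<mu>)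
     \<le> (\<integral>\<^sup>+x. (Ka * Sb) * (W x * indicator B x) + (Ka * c * Sb) * indicator B x \<partial>\<mu>)"
  proof (rule nn_integral_mono_AE)
    show "AE x in \<mu>. (\<integral>\<^sup>+ ll. enn_powr (\<integral>\<^sup>+ j. ennreal (2 powr (- \<bar>real_of_int (j - ll)\<bar> * \<delta>) * g j x) \<partial>count_space UNIV) p \<partial>count_space {-k..}) * indicator B x
      \<le> (Ka * Sb) * (W x * indicator B x) + (Ka * c * Sb) * indicator B x"
      using AEg
    proof (rule eventually_mono)
      fix x assume gx: "\<forall>j. g j x \<le> C1 * m"
      show "(\<integral>\<^sup>+ ll. enn_powr (\<integral>\<^sup>+ j. ennreal (2 powr (- \<bar>real_of_int (j - ll)\<bar> * \<delta>) * g j x) \<partial>count_space UNIV) p \<partial>count_space {-k..}) * indicator B x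
        \<le> (Ka * Sb) * (W x * indicator B x) + (Ka * c * Sb) * indicator B x"
        using pt[OF gx] by (cases "x \<in> B") (simp_all add: algebra_simps)
    qed
  qed
  also have "\<dots> = (Ka * Sb) * (\<integral>\<^sup>+x\<in>B. W x \<partial>\<mu>) + (Ka * c * Sb) * emeasure \<mu> B"
    by (simp add: nn_integral_add nn_integral_cmult nn_integral_cmult_indicator)
  also have "\<dots> \<le> (Ka * Sb) * (ennreal (m powr p) * emeasure \<mu> B) + (Ka * c * Sb) * emeasure \<mu> B"
    using int_le_of_avg[OF B fin avg[folded W_def]] by (intro add_mono mult_left_mono) auto
  also have "\<dots> = ((Ka * Sb * (1 + ennreal (C1 powr p))) * ennreal (m powr p)) * emeasure \<mu> B"
  proof -
    have "c = ennreal (C1 powr p) * ennreal (m powr p)"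
      unfolding c_def using C1 m by (simp add: powr_mult ennreal_mult)
    then show ?thesis by (simp add: algebra_simps)
  qed
  finally have le: "(\<integral>\<^sup>+x\<in>B. (\<integral>\<^sup>+ ll. enn_powr (\<integral>\<^sup>+ j. ennreal (2 powr (- \<bar>real_of_int (j - ll)\<bar> * \<delta>) * g j x) \<partial>count_space UNIV) p \<partial>count_space {-k..}) \<partial>\<mu>)
     \<le> ((Ka * Sb * (1 + ennreal (C1 powr p))) * ennreal (m powr p)) * emeasure \<mu> B" .
  show ?thesis
    using order_trans[OF divide_right_mono_ennreal[OF le] div_self_le] unfolding Ka_def Sb_def .
qed

theorem lemma3p13:
  fixes gm :: "'a::euclidean_space \<Rightarrow> 'a \<Rightarrow> 'a"
    and v :: "'a \<Rightarrow> real" and \<mu> :: "'a measure"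
    and nrm :: "'a \<Rightarrow> real" and \<gamma> :: real and xs :: "nat \<Rightarrow> 'a"
    and q :: ennreal and \<delta> C\<^sub>1 :: real
  assumes "homogeneous_group gm v"
    and "haar_measure gm \<mu>"
    and "hom_quasi_norm gm v nrm \<gamma>"
    and "maximal_disjoint_centres gm nrm \<gamma> xs"
    and "q > 0" and "\<delta> > 0" and "C\<^sub>1 > 0"
  shows "\<exists>C\<^sub>2>0. \<forall>g :: int \<Rightarrow> 'a \<Rightarrow> real.
           (\<forall>j. g j \<in> borel_measurable borel) \<longrightarrow>
           (\<forall>j x. 0 \<le> g j x) \<longrightarrow>
           (\<forall>j l. esssup_on \<mu> (dyball gm v nrm xs (- j) l) (g j)
                   \<le> ereal C\<^sub>1 * essinf_on \<mu> (dyball gm v nrm xs (- j) l) (g j)) \<longrightarrow>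
           carleson_norm gm v nrm xs \<mu> q
             (\<lambda>m x. \<integral>\<^sup>+ j. ennreal (2 powr (- \<bar>real_of_int (j - m)\<bar> * \<delta>) * g j x) \<partial>count_space UNIV)
           \<le> ennreal C\<^sub>2 * carleson_norm gm v nrm xs \<mu> q (\<lambda>j x. ennreal (g j x))"
proof -
  note hg = assms(1) and hm = assms(2) and hq = assms(3) and md = assms(4)
    and qpos = assms(5) and d = assms(6) and C1 = assms(7)
  have bm: "(borel_measurable \<mu> :: ('a \<Rightarrow> real) set) = borel_measurable borel"
    by (rule measurable_cong_sets[OF haar_sets[OF hm] refl])
  note Ds = dyball_sets[OF hg hq hm] and Dfin = dyball_fin[OF hg hq hm]
  show ?thesis
  proof (cases "q = \<infinity>")
    case qinf: True
    define C2 where "C2 = enn2real (Sg \<delta>) * (1 + C\<^sub>1) + 1"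
    have Sfin: "Sg \<delta> < \<infinity>" using Sg_fin d by blast
    have C2pos: "C2 > 0" unfolding C2_def using C1 by (simp add: add_nonneg_pos enn2real_nonneg)
    show ?thesis
    proof (intro exI[of _ C2] conjI C2pos allI impI)
      fix g :: "int \<Rightarrow> 'a \<Rightarrow> real"
      assume gmeas: "\<forall>j. g j \<in> borel_measurable borel" and g0: "\<forall>j x. 0 \<le> g j x"
        and reg: "\<forall>j l. esssup_on \<mu> (dyball gm v nrm xs (- j) l) (g j)
                   \<le> ereal C\<^sub>1 * essinf_on \<mu> (dyball gm v nrm xs (- j) l) (g j)"
      have gm': "\<And>j. g j \<in> borel_measurable \<mu>" using gmeas bm by simp
      define M where "M = carleson_norm gm v nrm xs \<mu> q (\<lambda>j x. ennreal (g j x))"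
      show "carleson_norm gm v nrm xs \<mu> q
             (\<lambda>m x. \<integral>\<^sup>+ j. ennreal (2 powr (- \<bar>real_of_int (j - m)\<bar> * \<delta>) * g j x) \<partial>count_space UNIV)
           \<le> ennreal C2 * carleson_norm gm v nrm xs \<mu> q (\<lambda>j x. ennreal (g j x))"
      proof (cases M rule: ennreal_cases)
        case top
        have "carleson_norm gm v nrm xs \<mu> q (\<lambda>j x. ennreal (g j x)) = \<top>" using top unfolding M_def .
        then show ?thesis using C2pos by simp
      next
        case (real m)
        have avgM: "(\<integral>\<^sup>+x\<in>dyball gm v nrm xs k l. ennreal (g j x) \<partial>\<mu>) / emeasure \<mu> (dyball gm v nrm xs k l) \<le> ennreal m"
          if "j \<ge> -k" for k l j
        proof -
          have "(\<integral>\<^sup>+x\<in>dyball gm v nrm xs (fst (k,l)) (snd (k,l)). ennreal (g j x) \<partial>\<mu>) / emeasure \<mu> (dyball gm v nrm xs (fst (k,l)) (snd (k,l))) \<le> M"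
            unfolding M_def carleson_norm_def using qinf that
            by (auto intro!: SUP_upper2[of "(k,l)"] SUP_upper2[of j])
          then show ?thesis using real by simp
        qed
        have AEg: "AE x in \<mu>. \<forall>j. g j x \<le> C\<^sub>1 * m"
        proof (rule global_bound[OF hg hm hq md _ real(1) C1, where p=1])
          show "\<And>j x. 0 \<le> g j x" using g0 by blast
          show "\<And>j l. esssup_on \<mu> (dyball gm v nrm xs (- j) l) (g j)
                   \<le> ereal C\<^sub>1 * essinf_on \<mu> (dyball gm v nrm xs (- j) l) (g j)" using reg by blast
          fix j l
          have "(\<integral>\<^sup>+x\<in>dyball gm v nrm xs (- j) l. ennreal (g j x powr 1) \<partial>\<mu>)
             = (\<integral>\<^sup>+x\<in>dyball gm v nrm xs (- j) l. ennreal (g j x) \<partial>\<mu>)"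
            using g0 by (intro nn_integral_cong) simp
          then show "(\<integral>\<^sup>+x\<in>dyball gm v nrm xs (- j) l. ennreal (g j x powr 1) \<partial>\<mu>)
                   / emeasure \<mu> (dyball gm v nrm xs (- j) l) \<le> ennreal (m powr 1)"
            using avgM[of "-j" j l] real(1) by simp
        qed simp
        have "carleson_norm gm v nrm xs \<mu> q
             (\<lambda>m x. \<integral>\<^sup>+ j. ennreal (2 powr (- \<bar>real_of_int (j - m)\<bar> * \<delta>) * g j x) \<partial>count_space UNIV)
           \<le> Sg \<delta> * ennreal ((1 + C\<^sub>1) * m)"
          unfolding carleson_norm_def if_P[OF qinf]
        proof (intro SUP_least)
          fix kl :: "int \<times> nat" and ll assume "ll \<in> {- fst kl..}"
          then have ll: "ll \<ge> - fst kl" by simp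
          show "(\<integral>\<^sup>+x\<in>dyball gm v nrm xs (fst kl) (snd kl). (\<integral>\<^sup>+ j. ennreal (2 powr (- \<bar>real_of_int (j - ll)\<bar> * \<delta>) * g j x) \<partial>count_space UNIV) \<partial>\<mu>)
           / emeasure \<mu> (dyball gm v nrm xs (fst kl) (snd kl)) \<le> Sg \<delta> * ennreal ((1 + C\<^sub>1) * m)"
            by (rule est_inf[OF Ds Dfin gm' _ AEg real(1) C1 avgM]) (use g0 in auto)
        qed
        also have "\<dots> \<le> ennreal C2 * M"
        proof -
          have S: "Sg \<delta> = ennreal (enn2real (Sg \<delta>))" using Sfin by simp
          have "Sg \<delta> * ennreal ((1 + C\<^sub>1) * m) = ennreal (enn2real (Sg \<delta>)) * ennreal ((1 + C\<^sub>1) * m)"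
            by (subst S) (rule refl)
          also have "\<dots> = ennreal (enn2real (Sg \<delta>) * (1 + C\<^sub>1)) * ennreal m"
            using C1 real(1) by (simp add: ennreal_mult[symmetric] mult.assoc)
          also have "\<dots> \<le> ennreal C2 * ennreal m"
            unfolding C2_def by (intro mult_right_mono ennreal_leI) auto
          finally show ?thesis using real by simp
        qed
        finally show ?thesis unfolding M_def .
      qed
    qed
  next
    case qfin: False
    define p where "p = enn2real q"
    have p: "p > 0" unfolding p_def using qpos qfin by (simp add: enn2real_positive_iff top.not_eq_extremum)
    define K where "K = enn_powr (Sg (\<delta>/2)) p * Sg (\<delta>/2*p) * (1 + ennreal (C\<^sub>1 powr p))"
    have Kfin: "K < \<infinity>"
    proof -
      have "Sg (\<delta>/2) < \<infinity>" "Sg (\<delta>/2*p) < \<infinity>" using Sg_fin d p by auto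
      then show ?thesis unfolding K_def enn_powr_def by (simp add: ennreal_mult_less_top)
    qed
    define C2 where "C2 = enn2real K powr (1/p) + 1"
    have C2pos: "C2 > 0" unfolding C2_def by (simp add: add_nonneg_pos)
    show ?thesis
    proof (intro exI[of _ C2] conjI C2pos allI impI)
      fix g :: "int \<Rightarrow> 'a \<Rightarrow> real"
      assume gmeas: "\<forall>j. g j \<in> borel_measurable borel" and g0: "\<forall>j x. 0 \<le> g j x"
        and reg: "\<forall>j l. esssup_on \<mu> (dyball gm v nrm xs (- j) l) (g j)
                   \<le> ereal C\<^sub>1 * essinf_on \<mu> (dyball gm v nrm xs (- j) l) (g j)"
      have gm': "\<And>j. g j \<in> borel_measurable \<mu>" using gmeas bm by simp
      have ep: "enn_powr (ennreal (g j x)) (enn2real q) = ennreal (g j x powr p)" for j x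
        unfolding p_def using g0 by (simp add: enn_powr_ennreal)
      define M where "M = carleson_norm gm v nrm xs \<mu> q (\<lambda>j x. ennreal (g j x))"
      show "carleson_norm gm v nrm xs \<mu> q
             (\<lambda>m x. \<integral>\<^sup>+ j. ennreal (2 powr (- \<bar>real_of_int (j - m)\<bar> * \<delta>) * g j x) \<partial>count_space UNIV)
           \<le> ennreal C2 * carleson_norm gm v nrm xs \<mu> q (\<lambda>j x. ennreal (g j x))"
      proof (cases M rule: ennreal_cases)
        case top
        have "carleson_norm gm v nrm xs \<mu> q (\<lambda>j x. ennreal (g j x)) = \<top>" using top unfolding M_def .
        then show ?thesis using C2pos by simp
      next
        case (real m)
        have avgM: "(\<integral>\<^sup>+x\<in>dyball gm v nrm xs k l. (\<integral>\<^sup>+ j. ennreal (g j x powr p) \<partial>count_space {-k..}) \<partial>\<mu>)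
            / emeasure \<mu> (dyball gm v nrm xs k l) \<le> ennreal (m powr p)" for k l
        proof -
          have "enn_powr ((\<integral>\<^sup>+x\<in>dyball gm v nrm xs (fst (k,l)) (snd (k,l)). (\<integral>\<^sup>+ j. enn_powr (ennreal (g j x)) (enn2real q) \<partial>count_space {- fst (k,l)..}) \<partial>\<mu>)
             / emeasure \<mu> (dyball gm v nrm xs (fst (k,l)) (snd (k,l)))) (1 / enn2real q) \<le> M"
            unfolding M_def carleson_norm_def using qfin
            by (simp only: if_False) (rule SUP_upper, simp)
          then have "enn_powr ((\<integral>\<^sup>+x\<in>dyball gm v nrm xs k l. (\<integral>\<^sup>+ j. ennreal (g j x powr p) \<partial>count_space {-k..}) \<partial>\<mu>)
             / emeasure \<mu> (dyball gm v nrm xs k l)) (1/p) \<le> ennreal m"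
            using real(2) unfolding ep by (simp add: p_def)
          then show ?thesis by (rule enn_powr_le_ennreal[OF _ p real(1)])
        qed
        have AEg: "AE x in \<mu>. \<forall>j. g j x \<le> C\<^sub>1 * m"
        proof (rule global_bound[OF hg hm hq md p real(1) C1])
          show "\<And>j x. 0 \<le> g j x" using g0 by blast
          show "\<And>j l. esssup_on \<mu> (dyball gm v nrm xs (- j) l) (g j)
                   \<le> ereal C\<^sub>1 * essinf_on \<mu> (dyball gm v nrm xs (- j) l) (g j)" using reg by blast
          fix j l
          have "(\<integral>\<^sup>+x\<in>dyball gm v nrm xs (- j) l. ennreal (g j x powr p) \<partial>\<mu>)
             \<le> (\<integral>\<^sup>+x\<in>dyball gm v nrm xs (- j) l. (\<integral>\<^sup>+ i. ennreal (g i x powr p) \<partial>count_space {- (- j)..}) \<partial>\<mu>)"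
            by (intro nn_integral_mono mult_right_mono count_space_point_le[where f="\<lambda>i. ennreal (g i _ powr p)"]) auto
          then show "(\<integral>\<^sup>+x\<in>dyball gm v nrm xs (- j) l. ennreal (g j x powr p) \<partial>\<mu>)
                   / emeasure \<mu> (dyball gm v nrm xs (- j) l) \<le> ennreal (m powr p)"
            using avgM[of "-j" l] by (meson divide_right_mono_ennreal order_trans)
        qed
        have "carleson_norm gm v nrm xs \<mu> q
             (\<lambda>m x. \<integral>\<^sup>+ j. ennreal (2 powr (- \<bar>real_of_int (j - m)\<bar> * \<delta>) * g j x) \<partial>count_space UNIV)
           \<le> enn_powr K (1/p) * ennreal m"
          unfolding carleson_norm_def using qfin
        proof (simp only: if_False, intro SUP_least)
          fix kl :: "int \<times> nat"
          have e: "(\<integral>\<^sup>+x\<in>dyball gm v nrm xs (fst kl) (snd kl). (\<integral>\<^sup>+ ll. enn_powr (\<integral>\<^sup>+ j. ennreal (2 powr (- \<bar>real_of_int (j - ll)\<bar> * \<delta>) * g j x) \<partial>count_space UNIV) p \<partial>count_space {- fst kl..}) \<partial>\<mu>)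
           / emeasure \<mu> (dyball gm v nrm xs (fst kl) (snd kl)) \<le> K * ennreal (m powr p)"
            unfolding K_def
            by (rule est_fin[OF Ds Dfin gm' _ AEg real(1) C1 d p avgM]) (use g0 in auto)
          have "enn_powr ((\<integral>\<^sup>+x\<in>dyball gm v nrm xs (fst kl) (snd kl). (\<integral>\<^sup>+ ll. enn_powr (\<integral>\<^sup>+ j. ennreal (2 powr (- \<bar>real_of_int (j - ll)\<bar> * \<delta>) * g j x) \<partial>count_space UNIV) p \<partial>count_space {- fst kl..}) \<partial>\<mu>)
           / emeasure \<mu> (dyball gm v nrm xs (fst kl) (snd kl))) (1/p) \<le> enn_powr (K * ennreal (m powr p)) (1/p)"
            using e p by (intro enn_powr_mono) auto
          also have "\<dots> = enn_powr K (1/p) * ennreal m"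
            using p real(1) by (simp add: enn_powr_mult enn_powr_ennreal powr_powr)
          finally show "enn_powr ((\<integral>\<^sup>+x\<in>dyball gm v nrm xs (fst kl) (snd kl). (\<integral>\<^sup>+ ll. enn_powr (\<integral>\<^sup>+ j. ennreal (2 powr (- \<bar>real_of_int (j - ll)\<bar> * \<delta>) * g j x) \<partial>count_space UNIV) (enn2real q) \<partial>count_space {- fst kl..}) \<partial>\<mu>)
           / emeasure \<mu> (dyball gm v nrm xs (fst kl) (snd kl))) (1 / enn2real q) \<le> enn_powr K (1/p) * ennreal m"
            unfolding p_def .
        qed
        also have "\<dots> \<le> ennreal C2 * M"
        proof -
          have "enn_powr K (1/p) = ennreal (enn2real K powr (1/p))"
            using Kfin unfolding enn_powr_def by simp
          also have "\<dots> \<le> ennreal C2" unfolding C2_def by (intro ennreal_leI) simp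
          finally show ?thesis using real by (simp add: mult_right_mono)
        qed
        finally show ?thesis unfolding M_def .
      qed
    qed
  qed
qed

end
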